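(* Assume the sponge $F\subset[0,1]^d$ satisfies the SPPC. Then for all $\mathbf i\in\Sigma$ and $r>0$, $\pi(B_{\mathbf i}(r))\subseteq B(\pi(\mathbf i),\sqrt d\,r)$. Moreover, if $F$ satisfies the very strong SPPC and $\delta_0>0$ is a constant such that for every $\sigma\in\mathcal A$, $1\le n\le d$ and $i,j\in\mathcal I$ for which $f_i,f_j$ do not overlap exactly on $E_n^\sigma$ one has $\mathrm{dist}\big(\Pi_n^\sigma(f_i([0,1]^d)),\Pi_n^\sigma(f_j([0,1]^d))\big)\ge\delta_0$, then for all $\mathbf i\in\Sigma$ and $r>0$, $B(\pi(\mathbf i),\delta_0r)\cap F\subseteq\pi(B_{\mathbf i}(r))$.
   Context: Setting: $\mathcal I=\{1,\dots,N\}$, $f_i(x)=A_ix+t_i$ on $\mathbb R^d$ with $A_i=\mathrm{diag}(\lambda_i^{(1)},\dots,\lambda_i^{(d)})$, all $\lambda_i^{(n)}\in(0,1)$, $f_i([0,1]^d)\subset[0,1]^d$, no two maps agree on $[0,1]^d$, and for all $m\ne n$ some $i$ has $\lambda_i^{(n)}\ne\lambda_i^{(m)}$; $F$ is the attractor. $\Sigma=\mathcal I^{\mathbb N}$, $\pi(\mathbf i)=\lim_kf_{i_1}\circ\cdots\circ f_{i_k}(0)$; $B(x,\rho)$ is the Euclidean ball. For $\mathbf i\in\Sigma$, $r>0$, $L_{\mathbf i}(r,n)$ is the unique integer with $\prod_{\ell=1}^{L_{\mathbf i}(r,n)}\lambda_{i_\ell}^{(n)}\le r<\prod_{\ell=1}^{L_{\mathbf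 i}(r,n)-1}\lambda_{i_\ell}^{(n)}$. $\mathbf i$ determines a $\sigma$-ordered cube at scale $r$ if $L_{\mathbf i}(r,\sigma_d)\le\dots\le L_{\mathbf i}(r,\sigma_1)$, ties resolved by: if coordinates $k<m$ have $L_{\mathbf i}(r,k)=L_{\mathbf i}(r,m)$ then $k$ precedes $m$ iff $\prod_{\ell=1}^{L_{\mathbf i}(r,k)}\lambda_{i_\ell}^{(k)}\ge\prod_{\ell=1}^{L_{\mathbf i}(r,k)}\lambda_{i_\ell}^{(m)}$; write $\sigma_{\mathbf i}(r)$ for it, and $\mathcal A$ for the set of all orderings so arising. $E_n^\sigma$: span of coordinate axes $\sigma_1,\dots,\sigma_n$, $\Pi_n^\sigma$ the orthogonal projection onto it; $f_i,f_j$ overlap exactly on $E_n^\sigma$ if $\Pi_n^\sigma f_i=\Pi_n^\sigma f_j$ on $[0,1]^d$. SPPC: for all $\sigma\in\mathcal A$, $1\le n\le d$, $i,j$, either $f_i,f_j$ overlap exactly on $E_n^\sigma$ or $\Pi_n^\sigma(f_i((0,1)^d))\cap\Pi_n^\sigma(f_j((0,1)^d))=\emptyset$; very strong SPPC: the same with $[0,1]^d$ in place of $(0,1)^d$. For $1\le n\le d-1$, $\mathcal I_n^\sigma$ is the set of $j$ such that no $i<j$ overlaps exactly with $j$ on $E_n^\sigma$; $\mathcal I_d^\sigma=\mathcal I$; $\Pi_n^\sigma j$ (on indices) is the unique element of $\mathcal I_n^\sigma$ overlapping exactly with $j$ on $E_n^\sigma$, extended to $\Sigma$ coordinatewise. $B_{\mathbf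 i}(r)=\{\mathbf j\in\Sigma:|\Pi_n^\sigma\mathbf j\wedge\Pi_n^\sigma\mathbf i|\ge L_{\mathbf i}(r,\sigma_n)\ \forall n\}$ with $\sigma=\sigma_{\mathbf i}(r)$ and $\wedge$ the longest common prefix. *)

theory Defs
  imports "HOL-Analysis.Analysis"
begin

text \<open>Coordinates of R^d are indexed by a finite linearly
ordered type 'd (d = CARD('d)); maps are indexed by I = {1..N}.
lam i k is the k-th diagonal entry of A_i, t i the translation of f_i.\<close>

definition fmap :: "(nat \<Rightarrow> 'd::{finite,linorder} \<Rightarrow> real) \<Rightarrow> (nat \<Rightarrow> (real, 'd) vec) \<Rightarrow> nat \<Rightarrow> (real, 'd) vec \<Rightarrow> (real, 'd) vec" where
  "fmap lam t i x = (\<chi> k. lam i k * x $ k + t i $ k)"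

definition Idx :: "nat \<Rightarrow> nat set" where
  "Idx N = {1..N}"

text \<open>Symbol space: sequences; position 0 holds i_1.\<close>
definition SymSp :: "nat \<Rightarrow> (nat \<Rightarrow> nat) set" where
  "SymSp N = {w. \<forall>l. w l \<in> Idx N}"

definition coding :: "(nat \<Rightarrow> 'd::{finite,linorder} \<Rightarrow> real) \<Rightarrow> (nat \<Rightarrow> (real, 'd) vec) \<Rightarrow> (nat \<Rightarrow> nat) \<Rightarrow> (real, 'd) vec" where
  "coding lam t w = lim (\<lambda>K. foldr (fmap lam t) (map w [0..<K]) 0)"

text \<open>L_w(r,k): least L with prod_{l=1}^L lam_{w_l}^{(k)} <= r (for r<1 this is the unique
integer of the paper).\<close>
definition Lfun :: "(nat \<Rightarrow> 'd::{finite,linorder} \<Rightarrow> real) \<Rightarrow> (nat \<Rightarrow> nat) \<Rightarrow> real \<Rightarrow> 'd \<Rightarrow> nat" where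
  "Lfun lam w r k = (LEAST L. (\<Prod>l<L. lam (w l) k) \<le> r)"

definition prec :: "(nat \<Rightarrow> 'd::{finite,linorder} \<Rightarrow> real) \<Rightarrow> (nat \<Rightarrow> nat) \<Rightarrow> real \<Rightarrow> 'd \<Rightarrow> 'd \<Rightarrow> bool" where
  "prec lam w r k m =
     (Lfun lam w r m < Lfun lam w r k \<or>
      (Lfun lam w r k = Lfun lam w r m \<and> k \<noteq> m \<and>
        (if k < m then (\<Prod>l<Lfun lam w r k. lam (w l) m) \<le> (\<Prod>l<Lfun lam w r k. lam (w l) k)
         else (\<Prod>l<Lfun lam w r k. lam (w l) m) < (\<Prod>l<Lfun lam w r k. lam (w l) k))))"

definition sigma_ordered :: "(nat \<Rightarrow> 'd::{finite,linorder} \<Rightarrow> real) \<Rightarrow> (nat \<Rightarrow> nat) \<Rightarrow> real \<Rightarrow> 'd list \<Rightarrow> bool" where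
  "sigma_ordered lam w r \<sigma> = (distinct \<sigma> \<and> set \<sigma> = UNIV \<and> sorted_wrt (prec lam w r) \<sigma>)"

definition sigma_of :: "(nat \<Rightarrow> 'd::{finite,linorder} \<Rightarrow> real) \<Rightarrow> (nat \<Rightarrow> nat) \<Rightarrow> real \<Rightarrow> 'd list" where
  "sigma_of lam w r = (THE \<sigma>. sigma_ordered lam w r \<sigma>)"

definition Acal :: "(nat \<Rightarrow> 'd::{finite,linorder} \<Rightarrow> real) \<Rightarrow> nat \<Rightarrow> 'd list set" where
  "Acal lam N = {sigma_of lam w r | w r. w \<in> SymSp N \<and> r > 0}"

text \<open>Orthogonal projection onto E_n^sigma = span of axes sigma_1..sigma_n.\<close>
definition Proj :: "'d::{finite,linorder} list \<Rightarrow> nat \<Rightarrow> (real, 'd) vec \<Rightarrow> (real, 'd) vec" where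
  "Proj \<sigma> n x = (\<chi> k. if k \<in> set (take n \<sigma>) then x $ k else 0)"

definition overlap_exactly :: "(nat \<Rightarrow> 'd::{finite,linorder} \<Rightarrow> real) \<Rightarrow> (nat \<Rightarrow> (real, 'd) vec) \<Rightarrow> 'd list \<Rightarrow> nat \<Rightarrow> nat \<Rightarrow> nat \<Rightarrow> bool" where
  "overlap_exactly lam t \<sigma> n i j =
     (\<forall>x\<in>cbox 0 One. Proj \<sigma> n (fmap lam t i x) = Proj \<sigma> n (fmap lam t j x))"

definition SPPC :: "(nat \<Rightarrow> 'd::{finite,linorder} \<Rightarrow> real) \<Rightarrow> (nat \<Rightarrow> (real, 'd) vec) \<Rightarrow> nat \<Rightarrow> bool" where
  "SPPC lam t N = (\<forall>\<sigma>\<in>Acal lam N. \<forall>n\<in>{1..CARD('d)}. \<forall>i\<in>Idx N. \<forall>j\<in>Idx N.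
      overlap_exactly lam t \<sigma> n i j \<or>
      (Proj \<sigma> n ` fmap lam t i ` box 0 One) \<inter> (Proj \<sigma> n ` fmap lam t j ` box 0 One) = {})"

definition very_strong_SPPC :: "(nat \<Rightarrow> 'd::{finite,linorder} \<Rightarrow> real) \<Rightarrow> (nat \<Rightarrow> (real, 'd) vec) \<Rightarrow> nat \<Rightarrow> bool" where
  "very_strong_SPPC lam t N = (\<forall>\<sigma>\<in>Acal lam N. \<forall>n\<in>{1..CARD('d)}. \<forall>i\<in>Idx N. \<forall>j\<in>Idx N.
      overlap_exactly lam t \<sigma> n i j \<or>
      (Proj \<sigma> n ` fmap lam t i ` cbox 0 One) \<inter> (Proj \<sigma> n ` fmap lam t j ` cbox 0 One) = {})"

definition Iset :: "(nat \<Rightarrow> 'd::{finite,linorder} \<Rightarrow> real) \<Rightarrow> (nat \<Rightarrow> (real, 'd) vec) \<Rightarrow> nat \<Rightarrow> 'd list \<Rightarrow> nat \<Rightarrow> nat set" where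
  "Iset lam t N \<sigma> n =
     (if n < CARD('d) then {j \<in> Idx N. \<not> (\<exists>i\<in>Idx N. i < j \<and> overlap_exactly lam t \<sigma> n i j)}
      else Idx N)"

definition proj_idx :: "(nat \<Rightarrow> 'd::{finite,linorder} \<Rightarrow> real) \<Rightarrow> (nat \<Rightarrow> (real, 'd) vec) \<Rightarrow> nat \<Rightarrow> 'd list \<Rightarrow> nat \<Rightarrow> nat \<Rightarrow> nat" where
  "proj_idx lam t N \<sigma> n j = (THE i. i \<in> Iset lam t N \<sigma> n \<and> overlap_exactly lam t \<sigma> n i j)"

definition proj_seq :: "(nat \<Rightarrow> 'd::{finite,linorder} \<Rightarrow> real) \<Rightarrow> (nat \<Rightarrow> (real, 'd) vec) \<Rightarrow> nat \<Rightarrow> 'd list \<Rightarrow> nat \<Rightarrow> (nat \<Rightarrow> nat) \<Rightarrow> (nat \<Rightarrow> nat)" where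
  "proj_seq lam t N \<sigma> n w = (\<lambda>l. proj_idx lam t N \<sigma> n (w l))"

definition common_prefix_ge :: "(nat \<Rightarrow> nat) \<Rightarrow> (nat \<Rightarrow> nat) \<Rightarrow> nat \<Rightarrow> bool" where
  "common_prefix_ge a b L = (\<forall>l<L. a l = b l)"

definition Bset :: "(nat \<Rightarrow> 'd::{finite,linorder} \<Rightarrow> real) \<Rightarrow> (nat \<Rightarrow> (real, 'd) vec) \<Rightarrow> nat \<Rightarrow> (nat \<Rightarrow> nat) \<Rightarrow> real \<Rightarrow> (nat \<Rightarrow> nat) set" where
  "Bset lam t N w r =
     (let \<sigma> = sigma_of lam w r in
      {v \<in> SymSp N. \<forall>n\<in>{1..CARD('d)}.
         common_prefix_ge (proj_seq lam t N \<sigma> n v) (proj_seq lam t N \<sigma> n w)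
                          (Lfun lam w r (\<sigma> ! (n - 1)))})"

definition sponge :: "(nat \<Rightarrow> 'd::{finite,linorder} \<Rightarrow> real) \<Rightarrow> (nat \<Rightarrow> (real, 'd) vec) \<Rightarrow> nat \<Rightarrow> ((real, 'd) vec) set \<Rightarrow> bool" where
  "sponge lam t N F =
     ((\<forall>i\<in>Idx N. \<forall>k. 0 < lam i k \<and> lam i k < 1) \<and>
      (\<forall>i\<in>Idx N. fmap lam t i ` cbox 0 One \<subseteq> cbox 0 One) \<and>
      (\<forall>i\<in>Idx N. \<forall>j\<in>Idx N. i \<noteq> j \<longrightarrow> (\<exists>x\<in>cbox 0 One. fmap lam t i x \<noteq> fmap lam t j x)) \<and>
      (\<forall>m n. m \<noteq> n \<longrightarrow> (\<exists>i\<in>Idx N. lam i n \<noteq> lam i m)) \<and>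
      F \<noteq> {} \<and> compact F \<and> F = (\<Union>i\<in>Idx N. fmap lam t i ` F))"

end

theory Submission
  imports Defs
begin


lemma One_nth_cart [simp]: "(One::(real,'n::finite) vec) $ i = 1"
proof -
  have "(One::(real,'n) vec) = (\<chi> i. 1)"
    using const_vector_cart[where d=1, where 'n='n] by simp
  then show ?thesis by simp
qed

lemma mem_cube: "(x::(real,'n::finite) vec) \<in> cbox 0 One \<longleftrightarrow> (\<forall>i. 0 \<le> x $ i \<and> x $ i \<le> 1)"
  by (simp only: mem_box_cart One_nth_cart) simp

lemma fmap_nth [simp]: "fmap lam t i x $ k = lam i k * x $ k + t i $ k"
  by (simp add: fmap_def)

lemma fold_coord:
  "foldr (fmap lam t) (map w [0..<K]) x $ k =
     (\<Sum>j<K. (\<Prod>l<j. lam (w l) k) * t (w j) $ k) + (\<Prod>l<K. lam (w l) k) * x $ k"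
proof (induction K arbitrary: x)
  case 0 then show ?case by simp
next
  case (Suc K)
  have "foldr (fmap lam t) (map w [0..<Suc K]) x = foldr (fmap lam t) (map w [0..<K]) (fmap lam t (w K) x)"
    by simp
  then show ?case using Suc[of "fmap lam t (w K) x"]
    by (simp add: algebra_simps)
qed

lemma rho_ex:
  assumes "\<forall>i\<in>Idx N. \<forall>k. 0 < lam i k \<and> lam i k < (1::real)"
  shows "\<exists>\<rho>. 0 \<le> \<rho> \<and> \<rho> < 1 \<and> (\<forall>i\<in>Idx N. \<forall>k::'d::finite. lam i k \<le> \<rho>)"
proof -
  let ?S = "insert 0 ((\<lambda>(i,k). lam i k) ` (Idx N \<times> (UNIV::'d set)))"
  have fin: "finite ?S" by (simp add: Idx_def)
  have "Max ?S < 1" using fin assms by (subst Max_less_iff) auto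
  moreover have "0 \<le> Max ?S" using fin by (simp add: Max_ge_iff)
  moreover have "\<forall>i\<in>Idx N. \<forall>k. lam i k \<le> Max ?S"
    using fin by (auto intro!: Max_ge)
  ultimately show ?thesis by blast
qed

lemma T_ex:
  shows "\<exists>T. \<forall>i\<in>Idx N. \<forall>k::'d::finite. \<bar>t i $ k\<bar> \<le> (T::real)"
proof -
  let ?S = "(\<lambda>(i,k). \<bar>t i $ k\<bar>) ` (Idx N \<times> (UNIV::'d set))"
  have fin: "finite ?S" by (simp add: Idx_def)
  have "\<forall>i\<in>Idx N. \<forall>k. \<bar>t i $ k\<bar> \<le> Max ?S"
    using fin by (auto intro!: Max_ge)
  then show ?thesis by blast
qed

lemma prod_bounds:
  assumes "\<forall>i\<in>Idx N. \<forall>k. 0 < lam i k \<and> lam i k < (1::real)"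
    and "w \<in> SymSp N" and "\<forall>i\<in>Idx N. \<forall>k. lam i k \<le> \<rho>"
  shows "0 < (\<Prod>l<j. lam (w l) k) \<and> (\<Prod>l<j. lam (w l) k) \<le> \<rho> ^ j"
proof -
  have w: "\<And>l. w l \<in> Idx N" using assms(2) by (simp add: SymSp_def)
  have "0 < (\<Prod>l<j. lam (w l) k)" using w assms(1) by (intro prod_pos) auto
  moreover have "(\<Prod>l<j. lam (w l) k) \<le> (\<Prod>l<j. \<rho>)"
    using w assms(1,3) by (intro prod_mono) (auto simp: less_imp_le)
  ultimately show ?thesis by simp
qed

definition SPos :: "(nat \<Rightarrow> 'd::{finite,linorder} \<Rightarrow> real) \<Rightarrow> nat \<Rightarrow> bool" where
  "SPos lam N = (\<forall>i\<in>Idx N. \<forall>k. 0 < lam i k \<and> lam i k < 1)"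

lemma term_summable:
  assumes "SPos lam N" and "w \<in> SymSp N"
  shows "summable (\<lambda>j. (\<Prod>l<j. lam (w l) k) * t (w j) $ k)"
proof -
  obtain \<rho> where r: "0 \<le> \<rho>" "\<rho> < 1" "\<forall>i\<in>Idx N. \<forall>k. lam i k \<le> \<rho>"
    using rho_ex[of N lam] assms(1) unfolding SPos_def by blast
  obtain T where T: "\<forall>i\<in>Idx N. \<forall>k. \<bar>t i $ k\<bar> \<le> T" using T_ex by blast
  have w: "\<And>l. w l \<in> Idx N" using assms(2) by (simp add: SymSp_def)
  have b: "\<bar>(\<Prod>l<j. lam (w l) k) * t (w j) $ k\<bar> \<le> \<rho> ^ j * T" for j
  proof -
    have p: "0 < (\<Prod>l<j. lam (w l) k) \<and> (\<Prod>l<j. lam (w l) k) \<le> \<rho> ^ j"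
      using prod_bounds[where N=N and lam=lam and w=w and \<rho>=\<rho> and j=j and k=k] assms r unfolding SPos_def by blast
    have "\<bar>(\<Prod>l<j. lam (w l) k) * t (w j) $ k\<bar> = (\<Prod>l<j. lam (w l) k) * \<bar>t (w j) $ k\<bar>"
      using p by (simp add: abs_mult)
    also have "\<dots> \<le> \<rho> ^ j * T"
      using p T w by (intro mult_mono) auto
    finally show ?thesis .
  qed
  show ?thesis
    by (rule summable_comparison_test'[where g="\<lambda>j. \<rho> ^ j * T" and N=0])
       (use r b in \<open>auto intro!: summable_mult2\<close>)
qed

lemma coding_nth:
  assumes "SPos lam N" and "w \<in> SymSp N"
  shows "coding lam t w $ k = (\<Sum>j. (\<Prod>l<j. lam (w l) k) * t (w j) $ k)"
proof -
  let ?X = "\<lambda>K. foldr (fmap lam t) (map w [0..<K]) 0"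
  let ?a = "\<chi> k. (\<Sum>j. (\<Prod>l<j. lam (w l) k) * t (w j) $ k)"
  have "?X \<longlonglongrightarrow> ?a"
  proof (rule vec_tendstoI)
    fix i
    have "(\<lambda>K. ?X K $ i) = (\<lambda>K. \<Sum>j<K. (\<Prod>l<j. lam (w l) i) * t (w j) $ i)"
      by (simp add: fold_coord)
    then show "(\<lambda>K. ?X K $ i) \<longlonglongrightarrow> ?a $ i"
      using summable_LIMSEQ[OF term_summable[OF assms, of i t]] by simp
  qed
  then have "coding lam t w = ?a" unfolding coding_def by (rule limI)
  then show ?thesis by simp
qed

lemma prod_shift:
  fixes j l :: nat and lam :: "nat \<Rightarrow> 'd \<Rightarrow> real"
  shows "(\<Prod>i<j + l. lam (w i) k) = (\<Prod>i<l. lam (w i) k) * (\<Prod>i<j. lam (w (i + l)) k)"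
  by (induction j) (auto simp: ac_simps)

lemma shift_SymSp: "w \<in> SymSp N \<Longrightarrow> (\<lambda>i. w (i + l)) \<in> SymSp N"
  by (simp add: SymSp_def)

lemma coding_shift:
  assumes "SPos lam N" and "w \<in> SymSp N"
  shows "coding lam t w $ k = (\<Sum>j<l. (\<Prod>i<j. lam (w i) k) * t (w j) $ k)
            + (\<Prod>i<l. lam (w i) k) * coding lam t (\<lambda>i. w (i + l)) $ k"
proof -
  let ?f = "\<lambda>j. (\<Prod>i<j. lam (w i) k) * t (w j) $ k"
  have "coding lam t w $ k = (\<Sum>j. ?f (j + l)) + (\<Sum>j<l. ?f j)"
    using coding_nth[OF assms] suminf_split_initial_segment[OF term_summable[OF assms]] by simp
  also have "(\<Sum>j. ?f (j + l)) = (\<Prod>i<l. lam (w i) k) * (\<Sum>j. (\<Prod>i<j. lam (w (i + l)) k) * t (w (j + l)) $ k)"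
    using term_summable[OF assms(1) shift_SymSp[OF assms(2), of l], where t=t and k=k]
    by (subst suminf_mult[symmetric]) (auto simp: prod_shift mult.assoc)
  also have "(\<Sum>j. (\<Prod>i<j. lam (w (i + l)) k) * t (w (j + l)) $ k) = coding lam t (\<lambda>i. w (i + l)) $ k"
    using coding_nth[OF assms(1) shift_SymSp[OF assms(2)]] by simp
  finally show ?thesis by simp
qed

lemma coding_step:
  assumes "SPos lam N" and "w \<in> SymSp N"
  shows "coding lam t w = fmap lam t (w 0) (coding lam t (\<lambda>i. w (i + 1)))"
  using coding_shift[OF assms, where l=1 and t=t] by (simp add: vec_eq_iff)

lemma fold_cube:
  assumes "\<forall>i\<in>Idx N. fmap lam t i ` cbox 0 One \<subseteq> cbox 0 One" and "w \<in> SymSp N"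
  shows "x \<in> cbox 0 One \<Longrightarrow> foldr (fmap lam t) (map w [0..<K]) x \<in> cbox 0 One"
proof (induction K arbitrary: x)
  case 0 then show ?case by simp
next
  case (Suc K)
  have w: "w K \<in> Idx N" using assms(2) by (simp add: SymSp_def)
  have "fmap lam t (w K) x \<in> cbox 0 One" using assms(1) w Suc.prems by blast
  then show ?case using Suc.IH by simp
qed

lemma coding_cube:
  assumes "SPos lam N" and "\<forall>i\<in>Idx N. fmap lam t i ` cbox 0 One \<subseteq> cbox 0 One" and "w \<in> SymSp N"
  shows "coding lam t w \<in> cbox 0 One"
  unfolding mem_cube
proof
  fix k
  let ?X = "\<lambda>K. foldr (fmap lam t) (map w [0..<K]) 0"
  have X: "?X K $ k = (\<Sum>j<K. (\<Prod>l<j. lam (w l) k) * t (w j) $ k)" for K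
    by (simp add: fold_coord)
  have lim: "(\<lambda>K. ?X K $ k) \<longlonglongrightarrow> coding lam t w $ k"
    unfolding X coding_nth[OF assms(1,3)] by (rule summable_LIMSEQ[OF term_summable[OF assms(1,3)]])
  have c: "?X K \<in> cbox 0 One" for K
    by (rule fold_cube[OF assms(2,3)]) (simp add: mem_cube)
  have "0 \<le> ?X K $ k" "?X K $ k \<le> 1" for K using c[of K] unfolding mem_cube by auto
  then show "0 \<le> coding lam t w $ k \<and> coding lam t w $ k \<le> 1"
    using LIMSEQ_le_const[OF lim] LIMSEQ_le_const2[OF lim] by blast
qed



lemma sorted_ex1:
  fixes R :: "'a::finite \<Rightarrow> 'a \<Rightarrow> bool"
  assumes irr: "\<And>a. \<not> R a a" and tr: "\<And>a b c. R a b \<Longrightarrow> R b c \<Longrightarrow> R a c"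
    and tot: "\<And>a b. a \<noteq> b \<Longrightarrow> R a b \<or> R b a"
  shows "\<exists>!\<sigma>. distinct \<sigma> \<and> set \<sigma> = UNIV \<and> sorted_wrt R \<sigma>"
proof -
  define rk where "rk a = card {m. R m a}" for a
  have Rr: "R a b \<longleftrightarrow> rk a < rk b" for a b
  proof
    assume "R a b"
    then have "{m. R m a} \<subset> {m. R m b}" using tr irr by blast
    then show "rk a < rk b" unfolding rk_def by (intro psubset_card_mono) auto
  next
    assume "rk a < rk b"
    show "R a b"
    proof (rule ccontr)
      assume "\<not> R a b"
      then have "a = b \<or> R b a" using tot by blast
      then have "{m. R m b} \<subseteq> {m. R m a}" using tr by blast
      then have "rk b \<le> rk a" unfolding rk_def by (intro card_mono) auto
      then show False using \<open>rk a < rk b\<close> by simp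
    qed
  qed
  have inj: "inj rk"
  proof (rule injI)
    fix a b assume "rk a = rk b"
    then show "a = b" using Rr tot by (metis less_irrefl)
  qed
  have sw: "sorted_wrt R xs \<longleftrightarrow> sorted_wrt (<) (map rk xs)" for xs
  proof -
    have "R = (\<lambda>a b. rk a < rk b)" using Rr by (intro ext) simp
    then show ?thesis by (simp add: sorted_wrt_map)
  qed
  define \<sigma> where "\<sigma> = map (inv rk) (sorted_list_of_set (range rk))"
  have m: "map rk \<sigma> = sorted_list_of_set (range rk)"
    unfolding \<sigma>_def map_map by (rule map_idI) (simp add: f_inv_into_f)
  have s1: "set \<sigma> = UNIV" unfolding \<sigma>_def using inj by simp
  have s2: "distinct \<sigma>" using m by (metis distinct_map distinct_sorted_list_of_set)
  have s3: "sorted_wrt R \<sigma>" using m sw strict_sorted_list_of_set by metis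
  show ?thesis
  proof (rule ex1I[of _ \<sigma>])
    show "distinct \<sigma> \<and> set \<sigma> = UNIV \<and> sorted_wrt R \<sigma>" using s1 s2 s3 by blast
  next
    fix \<tau> assume "distinct \<tau> \<and> set \<tau> = UNIV \<and> sorted_wrt R \<tau>"
    then have "map rk \<tau> = map rk \<sigma>"
      using s1 s3 sw by (intro strict_sorted_equal) auto
    then show "\<tau> = \<sigma>" using inj by (simp add: inj_map_eq_map)
  qed
qed

lemma prec_alt:
  "prec lam w r k m \<longleftrightarrow>
     (Lfun lam w r m < Lfun lam w r k \<or>
      (Lfun lam w r k = Lfun lam w r m \<and> k \<noteq> m \<and>
        (if k < m then (\<Prod>l<Lfun lam w r m. lam (w l) m) \<le> (\<Prod>l<Lfun lam w r k. lam (w l) k)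
         else (\<Prod>l<Lfun lam w r m. lam (w l) m) < (\<Prod>l<Lfun lam w r k. lam (w l) k))))"
  unfolding prec_def by auto

lemma sigma_of_ordered: "sigma_ordered lam w r (sigma_of lam w r)"
proof -
  define L where "L = Lfun lam w r"
  define P where "P k = (\<Prod>l<L k. lam (w l) k)" for k
  have pa: "prec lam w r k m \<longleftrightarrow> (L m < L k \<or> (L k = L m \<and> k \<noteq> m \<and> (if k < m then P m \<le> P k else P m < P k)))" for k m
    unfolding prec_alt L_def P_def by simp
  have "\<exists>!\<sigma>. distinct \<sigma> \<and> set \<sigma> = UNIV \<and> sorted_wrt (prec lam w r) \<sigma>"
  proof (rule sorted_ex1)
    show "\<not> prec lam w r a a" for a by (simp add: pa)
    show "prec lam w r a b \<or> prec lam w r b a" if "a \<noteq> b" for a b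
      using that by (auto simp: pa split: if_splits)
    show "prec lam w r a c" if "prec lam w r a b" "prec lam w r b c" for a b c
      using that unfolding pa by (auto split: if_splits)
  qed
  then show ?thesis unfolding sigma_of_def sigma_ordered_def by (rule theI')
qed



lemma sigma_len:
  fixes \<sigma> :: "'d::{finite,linorder} list"
  shows "sigma_ordered lam w r \<sigma> \<Longrightarrow> length \<sigma> = CARD('d)"
proof -
  assume "sigma_ordered lam w r \<sigma>"
  then have "distinct \<sigma>" "set \<sigma> = UNIV" unfolding sigma_ordered_def by auto
  then show ?thesis by (metis distinct_card)
qed

lemma ov_sym: "overlap_exactly lam t \<sigma> n i j \<Longrightarrow> overlap_exactly lam t \<sigma> n j i"
  unfolding overlap_exactly_def by simp

lemma ov_trans: "overlap_exactly lam t \<sigma> n i j \<Longrightarrow> overlap_exactly lam t \<sigma> n j k \<Longrightarrow> overlap_exactly lam t \<sigma> n i k"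
  unfolding overlap_exactly_def by simp

lemma ov_refl: "overlap_exactly lam t \<sigma> n i i"
  unfolding overlap_exactly_def by simp

lemma ov_coord:
  assumes "overlap_exactly lam t \<sigma> n i j" "k \<in> set (take n \<sigma>)"
  shows "lam i k = lam j k \<and> t i $ k = t j $ k"
proof -
  have "Proj \<sigma> n (fmap lam t i x) $ k = Proj \<sigma> n (fmap lam t j x) $ k" if "x \<in> cbox 0 One" for x
    using assms(1) that unfolding overlap_exactly_def by simp
  then have e: "lam i k * x $ k + t i $ k = lam j k * x $ k + t j $ k" if "x \<in> cbox 0 One" for x
    using that assms(2) by (simp add: Proj_def)
  have "(0::(real,'a) vec) \<in> cbox 0 One" "(One::(real,'a) vec) \<in> cbox 0 One" by (simp_all only: mem_cube One_nth_cart, simp_all)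
  from e[OF this(1)] e[OF this(2)] have "t i $ k = t j $ k" "lam i k * (One::(real,'a) vec) $ k + t i $ k = lam j k * (One::(real,'a) vec) $ k + t j $ k"
    by simp_all
  then show ?thesis by (simp only: One_nth_cart) simp
qed

lemma proj_idx_eq:
  assumes "overlap_exactly lam t \<sigma> n i j"
  shows "proj_idx lam t N \<sigma> n i = proj_idx lam t N \<sigma> n j"
proof -
  have "(\<lambda>x. x \<in> Iset lam t N \<sigma> n \<and> overlap_exactly lam t \<sigma> n x i) =
        (\<lambda>x. x \<in> Iset lam t N \<sigma> n \<and> overlap_exactly lam t \<sigma> n x j)"
    by (intro ext) (meson ov_sym ov_trans assms)
  then show ?thesis unfolding proj_idx_def by simp
qed

lemma Proj_full:
  fixes \<sigma> :: "'d::{finite,linorder} list"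
  shows "sigma_ordered lam w r \<sigma> \<Longrightarrow> Proj \<sigma> CARD('d) x = x"
  using sigma_len[of lam w r \<sigma>] unfolding Proj_def sigma_ordered_def
  by (simp add: vec_eq_iff)

lemma proj_idx_spec:
  fixes \<sigma> :: "'d::{finite,linorder} list"
  assumes distinct: "\<forall>i\<in>Idx N. \<forall>j\<in>Idx N. i \<noteq> j \<longrightarrow> (\<exists>x\<in>cbox 0 One. fmap lam t i x \<noteq> fmap lam t j x)"
    and so: "sigma_ordered lam w r \<sigma>" and n: "n \<in> {1..CARD('d::{finite,linorder})}" and j: "j \<in> Idx N"
  shows "overlap_exactly lam t \<sigma> n (proj_idx lam t N \<sigma> n j) j"
proof -
  have "\<exists>!i. i \<in> Iset lam t N \<sigma> n \<and> overlap_exactly lam t \<sigma> n i j"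
  proof (cases "n < CARD('d)")
    case True
    define i0 where "i0 = (LEAST i. i \<in> Idx N \<and> overlap_exactly lam t \<sigma> n i j)"
    have i0: "i0 \<in> Idx N \<and> overlap_exactly lam t \<sigma> n i0 j"
      unfolding i0_def by (rule LeastI[of _ j]) (use j ov_refl in auto)
    have i0I: "i0 \<in> Iset lam t N \<sigma> n"
    proof -
      have "\<not> (\<exists>i\<in>Idx N. i < i0 \<and> overlap_exactly lam t \<sigma> n i i0)"
      proof
        assume "\<exists>i\<in>Idx N. i < i0 \<and> overlap_exactly lam t \<sigma> n i i0"
        then obtain i where "i \<in> Idx N" "i < i0" "overlap_exactly lam t \<sigma> n i j"
          using i0 ov_trans by blast
        then show False unfolding i0_def using not_less_Least by blast
      qed
      then show ?thesis using True i0 unfolding Iset_def by simp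
    qed
    show ?thesis
    proof (rule ex1I[of _ i0])
      show "i0 \<in> Iset lam t N \<sigma> n \<and> overlap_exactly lam t \<sigma> n i0 j" using i0 i0I by blast
    next
      fix i assume a: "i \<in> Iset lam t N \<sigma> n \<and> overlap_exactly lam t \<sigma> n i j"
      then have oi: "overlap_exactly lam t \<sigma> n i i0" using i0 ov_sym ov_trans by blast
      show "i = i0"
      proof (rule ccontr)
        assume "i \<noteq> i0"
        then consider "i < i0" | "i0 < i" by linarith
        then show False
        proof cases
          case 1 then show False using i0I a oi True unfolding Iset_def by auto
        next
          case 2
          have "overlap_exactly lam t \<sigma> n i0 i" using oi by (rule ov_sym)
          then show False using 2 i0I a True unfolding Iset_def by auto
        qed
      qed
    qed
  next
    case False
    then have nd: "n = CARD('d)" using n by simp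
    show ?thesis
    proof (rule ex1I[of _ j])
      show "j \<in> Iset lam t N \<sigma> n \<and> overlap_exactly lam t \<sigma> n j j"
        using False j ov_refl unfolding Iset_def by simp
    next
      fix i assume a: "i \<in> Iset lam t N \<sigma> n \<and> overlap_exactly lam t \<sigma> n i j"
      then have "i \<in> Idx N" using False unfolding Iset_def by simp
      moreover have "\<forall>x\<in>cbox 0 One. fmap lam t i x = fmap lam t j x"
        using a Proj_full[OF so] nd unfolding overlap_exactly_def by simp
      ultimately show "i = j" using distinct j by blast
    qed
  qed
  then show ?thesis unfolding proj_idx_def by (rule the1I2) blast
qed

lemma Lfun_ex:
  assumes "SPos lam N" "w \<in> SymSp N" "r > 0"
  shows "\<exists>L. (\<Prod>l<L. lam (w l) k) \<le> r"
proof -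
  obtain \<rho> where rr: "0 \<le> \<rho>" "\<rho> < 1" "\<forall>i\<in>Idx N. \<forall>k. lam i k \<le> \<rho>"
    using rho_ex[of N lam] assms(1) unfolding SPos_def by blast
  obtain L where "\<rho> ^ L < r" using real_arch_pow_inv[OF assms(3) rr(2)] by blast
  moreover have "(\<Prod>l<L. lam (w l) k) \<le> \<rho> ^ L"
    using prod_bounds[where N=N and lam=lam and w=w and \<rho>=\<rho> and j=L and k=k] assms rr
    unfolding SPos_def by blast
  ultimately show ?thesis by (intro exI[of _ L]) simp
qed

lemma Lfun_le:
  assumes "SPos lam N" "w \<in> SymSp N" "r > 0"
  shows "(\<Prod>l<Lfun lam w r k. lam (w l) k) \<le> r"
  unfolding Lfun_def by (rule LeastI_ex[OF Lfun_ex[OF assms]])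

lemma Lfun_gt:
  assumes "j < Lfun lam w r k"
  shows "r < (\<Prod>l<j. lam (w l) k)"
  using not_less_Least[OF assms[unfolded Lfun_def]] by simp

lemma coding_diff:
  assumes "SPos lam N" "v \<in> SymSp N" "w \<in> SymSp N"
    and eq: "\<forall>l<L. lam (v l) k = lam (w l) k \<and> t (v l) $ k = t (w l) $ k"
  shows "coding lam t v $ k - coding lam t w $ k =
     (\<Prod>i<L. lam (w i) k) * (coding lam t (\<lambda>i. v (i + L)) $ k - coding lam t (\<lambda>i. w (i + L)) $ k)"
proof -
  have p: "(\<Prod>i<j. lam (v i) k) = (\<Prod>i<j. lam (w i) k)" if "j \<le> L" for j
    using eq that by (intro prod.cong) auto
  have s: "(\<Sum>j<L. (\<Prod>i<j. lam (v i) k) * t (v j) $ k) = (\<Sum>j<L. (\<Prod>i<j. lam (w i) k) * t (w j) $ k)"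
    using eq p by (intro sum.cong) auto
  show ?thesis
    using coding_shift[OF assms(1,2), where l=L and t=t and k=k] coding_shift[OF assms(1,3), where l=L and t=t and k=k]
      s p[of L] by (simp add: algebra_simps)
qed



lemma F_sub:
  assumes sp: "SPos lam N" and cF: "compact F" and inv: "F = (\<Union>i\<in>Idx N. fmap lam t i ` F)"
    and x: "x \<in> F"
  shows "\<exists>v\<in>SymSp N. coding lam t v = x"
proof -
  obtain B where B: "\<forall>y\<in>F. norm y \<le> B" using compact_imp_bounded[OF cF] bounded_iff by blast
  have "\<forall>y\<in>F. \<exists>p. fst p \<in> Idx N \<and> snd p \<in> F \<and> y = fmap lam t (fst p) (snd p)"
  proof
    fix y assume "y \<in> F"
    then have "y \<in> (\<Union>i\<in>Idx N. fmap lam t i ` F)" using inv by simp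
    then obtain i y' where "i \<in> Idx N" "y' \<in> F" "y = fmap lam t i y'" by blast
    then show "\<exists>p. fst p \<in> Idx N \<and> snd p \<in> F \<and> y = fmap lam t (fst p) (snd p)"
      by (intro exI[of _ "(i, y')"]) simp
  qed
  then obtain c where c: "\<forall>y\<in>F. fst (c y) \<in> Idx N \<and> snd (c y) \<in> F \<and> y = fmap lam t (fst (c y)) (snd (c y))"
    by metis
  define ys where "ys K = ((snd \<circ> c) ^^ K) x" for K
  define v where "v K = fst (c (ys K))" for K
  have ysF: "ys K \<in> F" for K
    by (induction K) (use x c in \<open>auto simp: ys_def\<close>)
  have ysS: "ys (Suc K) = snd (c (ys K))" for K by (simp add: ys_def)
  have vS: "v \<in> SymSp N" unfolding SymSp_def v_def using c ysF by blast
  have fx: "foldr (fmap lam t) (map v [0..<K]) (ys K) = x" for K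
  proof (induction K)
    case 0 then show ?case by (simp add: ys_def)
  next
    case (Suc K)
    have "fmap lam t (v K) (ys (Suc K)) = ys K" using c ysF[of K] by (simp add: v_def ysS)
    then show ?case using Suc by simp
  qed
  obtain \<rho> where rr: "0 \<le> \<rho>" "\<rho> < 1" "\<forall>i\<in>Idx N. \<forall>k. lam i k \<le> \<rho>"
    using rho_ex[of N lam] sp unfolding SPos_def by blast
  have "x $ k = coding lam t v $ k" for k
  proof -
    let ?S = "\<lambda>K. (\<Sum>j<K. (\<Prod>l<j. lam (v l) k) * t (v j) $ k)"
    let ?R = "\<lambda>K. (\<Prod>l<K. lam (v l) k) * ys K $ k"
    have e: "x $ k = ?S K + ?R K" for K using fold_coord[of lam t v K "ys K" k] fx[of K] by simp
    have l1: "?S \<longlonglongrightarrow> coding lam t v $ k"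
      unfolding coding_nth[OF sp vS] by (rule summable_LIMSEQ[OF term_summable[OF sp vS]])
    have l2: "?R \<longlonglongrightarrow> 0"
    proof (rule Lim_null_comparison)
      show "\<forall>\<^sub>F K in sequentially. norm (?R K) \<le> \<rho> ^ K * B"
      proof (rule always_eventually, rule allI)
        fix K
        have p: "0 < (\<Prod>l<K. lam (v l) k) \<and> (\<Prod>l<K. lam (v l) k) \<le> \<rho> ^ K"
          using prod_bounds[where N=N and lam=lam and w=v and \<rho>=\<rho> and j=K and k=k] sp vS rr
          unfolding SPos_def by blast
        have "\<bar>ys K $ k\<bar> \<le> B" using B ysF[of K] component_le_norm_cart[of "ys K" k] by force
        then show "norm (?R K) \<le> \<rho> ^ K * B"
          using p by (simp add: abs_mult) (rule mult_mono, auto)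
      qed
      show "(\<lambda>K. \<rho> ^ K * B) \<longlonglongrightarrow> 0"
        using LIMSEQ_power_zero[of \<rho>] rr by (auto intro: tendsto_mult_left_zero)
    qed
    have "(\<lambda>K. ?S K + ?R K) \<longlonglongrightarrow> coding lam t v $ k + 0" by (rule tendsto_add[OF l1 l2])
    then have "(\<lambda>K. x $ k) \<longlonglongrightarrow> coding lam t v $ k" using e by simp
    then show ?thesis by (simp add: LIMSEQ_const_iff)
  qed
  then show ?thesis using vS by (intro bexI[of _ v]) (auto simp: vec_eq_iff)
qed



lemma norm_ge_cart:
  fixes x y :: "(real, 'n::finite) vec"
  assumes "\<And>k. c * \<bar>y $ k\<bar> \<le> \<bar>x $ k\<bar>" "0 \<le> c"
  shows "c * norm y \<le> norm x"
proof -
  have "c * norm y = L2_set (\<lambda>k. c * \<bar>y $ k\<bar>) UNIV"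
    unfolding norm_vec_def using assms(2) by (simp add: L2_set_right_distrib)
  also have "\<dots> \<le> L2_set (\<lambda>k. \<bar>x $ k\<bar>) UNIV"
    using assms by (intro L2_set_mono) auto
  finally show ?thesis unfolding norm_vec_def by simp
qed

lemma norm_le_cart:
  fixes x :: "(real, 'n::finite) vec"
  assumes "\<And>k. \<bar>x $ k\<bar> \<le> r"
  shows "norm x \<le> sqrt (real CARD('n)) * r"
proof -
  have r: "0 \<le> r" using assms[of undefined] by simp
  have "norm x \<le> L2_set (\<lambda>k. r) (UNIV::'n set)"
    unfolding norm_vec_def using assms by (intro L2_set_mono) auto
  also have "\<dots> = sqrt (real CARD('n)) * r"
    unfolding L2_set_def using r by (simp add: real_sqrt_mult power2_eq_square)
  finally show ?thesis .
qed



lemma ov_of_proj: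
  fixes \<sigma> :: "'d::{finite,linorder} list"
  assumes distinct: "\<forall>i\<in>Idx N. \<forall>j\<in>Idx N. i \<noteq> j \<longrightarrow> (\<exists>x\<in>cbox 0 One. fmap lam t i x \<noteq> fmap lam t j x)"
    and so: "sigma_ordered lam w r \<sigma>" and n: "n \<in> {1..CARD('d)}" and i: "i \<in> Idx N" and j: "j \<in> Idx N"
    and eq: "proj_idx lam t N \<sigma> n i = proj_idx lam t N \<sigma> n j"
  shows "overlap_exactly lam t \<sigma> n i j"
proof -
  have a: "overlap_exactly lam t \<sigma> n (proj_idx lam t N \<sigma> n i) i"
    by (rule proj_idx_spec[OF distinct so n i])
  have b: "overlap_exactly lam t \<sigma> n (proj_idx lam t N \<sigma> n j) j"
    by (rule proj_idx_spec[OF distinct so n j])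
  show ?thesis using ov_trans[OF ov_sym[OF a] b[folded eq]] .
qed

lemma part1:
  fixes lam :: "nat \<Rightarrow> 'd::{finite,linorder} \<Rightarrow> real"
    and t :: "nat \<Rightarrow> (real, 'd) vec"
  assumes sp: "SPos lam N" and cube: "\<forall>i\<in>Idx N. fmap lam t i ` cbox 0 One \<subseteq> cbox 0 One"
    and distinct: "\<forall>i\<in>Idx N. \<forall>j\<in>Idx N. i \<noteq> j \<longrightarrow> (\<exists>x\<in>cbox 0 One. fmap lam t i x \<noteq> fmap lam t j x)"
    and w: "w \<in> SymSp N" and r: "r > 0" and v: "v \<in> Bset lam t N w r"
  shows "dist (coding lam t w) (coding lam t v) \<le> sqrt (real CARD('d)) * r"
proof -
  define \<sigma> where "\<sigma> = sigma_of lam w r"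
  have so: "sigma_ordered lam w r \<sigma>" unfolding \<sigma>_def by (rule sigma_of_ordered)
  have len: "length \<sigma> = CARD('d)" by (rule sigma_len[OF so])
  have vS: "v \<in> SymSp N" and vB: "\<forall>n\<in>{1..CARD('d)}. \<forall>l < Lfun lam w r (\<sigma> ! (n - 1)).
      proj_idx lam t N \<sigma> n (v l) = proj_idx lam t N \<sigma> n (w l)"
    using v unfolding Bset_def \<sigma>_def[symmetric] Let_def common_prefix_ge_def proj_seq_def by auto
  have vI: "v l \<in> Idx N" "w l \<in> Idx N" for l using vS w by (auto simp: SymSp_def)
  have "\<bar>(coding lam t w - coding lam t v) $ k\<bar> \<le> r" for k
  proof -
    have "k \<in> set \<sigma>" using so unfolding sigma_ordered_def by auto
    then obtain p where p: "p < length \<sigma>" "\<sigma> ! p = k" by (auto simp: in_set_conv_nth)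
    define n where "n = Suc p"
    have n: "n \<in> {1..CARD('d)}" using p len by (auto simp: n_def)
    have kS: "k \<in> set (take n \<sigma>)" using p by (auto simp: n_def in_set_conv_nth intro!: exI[of _ p])
    define L where "L = Lfun lam w r k"
    have eq: "\<forall>l<L. lam (v l) k = lam (w l) k \<and> t (v l) $ k = t (w l) $ k"
    proof (intro allI impI)
      fix l assume "l < L"
      then have "proj_idx lam t N \<sigma> n (v l) = proj_idx lam t N \<sigma> n (w l)"
        using vB n p by (auto simp: L_def n_def)
      then have "overlap_exactly lam t \<sigma> n (v l) (w l)"
        by (rule ov_of_proj[OF distinct so n vI])
      then show "lam (v l) k = lam (w l) k \<and> t (v l) $ k = t (w l) $ k" using ov_coord kS by blast
    qed
    have d: "coding lam t v $ k - coding lam t w $ k =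
      (\<Prod>i<L. lam (w i) k) * (coding lam t (\<lambda>i. v (i + L)) $ k - coding lam t (\<lambda>i. w (i + L)) $ k)"
      by (rule coding_diff[OF sp vS w eq])
    have c1: "coding lam t (\<lambda>i. v (i + L)) \<in> cbox 0 One" by (rule coding_cube[OF sp cube shift_SymSp[OF vS]])
    have c2: "coding lam t (\<lambda>i. w (i + L)) \<in> cbox 0 One" by (rule coding_cube[OF sp cube shift_SymSp[OF w]])
    have ab: "\<bar>coding lam t (\<lambda>i. v (i + L)) $ k - coding lam t (\<lambda>i. w (i + L)) $ k\<bar> \<le> 1"
      using c1 c2 unfolding mem_cube by (auto simp: abs_le_iff) (smt (verit))+
    have P1: "0 < (\<Prod>i<L. lam (w i) k)"
    proof -
      have s1: "\<forall>i\<in>Idx N. \<forall>k. 0 < lam i k \<and> lam i k < 1" using sp by (simp add: SPos_def)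
      then have "\<forall>i\<in>Idx N. \<forall>k. lam i k \<le> 1" by (auto simp: less_imp_le)
      then show ?thesis using prod_bounds[where N=N and lam=lam and w=w and \<rho>=1 and j=L and k=k] s1 w
        by blast
    qed
    have P2: "(\<Prod>i<L. lam (w i) k) \<le> r"
      using Lfun_le[OF sp w r] by (simp add: L_def)
    note P = P1 P2
    have "\<bar>coding lam t v $ k - coding lam t w $ k\<bar> \<le> (\<Prod>i<L. lam (w i) k) * 1"
      unfolding d abs_mult using P ab by (simp add: mult_left_mono)
    then show ?thesis using P by simp
  qed
  then have "norm (coding lam t w - coding lam t v) \<le> sqrt (real CARD('d)) * r"
    by (rule norm_le_cart)
  then show ?thesis by (simp add: dist_norm)
qed



lemma part2:
  fixes lam :: "nat \<Rightarrow> 'd::{finite,linorder} \<Rightarrow> real"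
    and t :: "nat \<Rightarrow> (real, 'd) vec"
  assumes sp: "SPos lam N" and cube: "\<forall>i\<in>Idx N. fmap lam t i ` cbox 0 One \<subseteq> cbox 0 One"
    and w: "w \<in> SymSp N" and r: "r > 0" and d0: "\<delta>\<^sub>0 > 0"
    and hyp: "\<forall>\<sigma>\<in>Acal lam N. \<forall>n\<in>{1..CARD('d)}. \<forall>i\<in>Idx N. \<forall>j\<in>Idx N.
                \<not> overlap_exactly lam t \<sigma> n i j \<longrightarrow>
                setdist (Proj \<sigma> n ` fmap lam t i ` cbox 0 One) (Proj \<sigma> n ` fmap lam t j ` cbox 0 One) \<ge> \<delta>\<^sub>0"
    and vS: "v \<in> SymSp N" and dv: "dist (coding lam t w) (coding lam t v) \<le> \<delta>\<^sub>0 * r"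
  shows "v \<in> Bset lam t N w r"
proof -
  define \<sigma> where "\<sigma> = sigma_of lam w r"
  have so: "sigma_ordered lam w r \<sigma>" unfolding \<sigma>_def by (rule sigma_of_ordered)
  have len: "length \<sigma> = CARD('d)" by (rule sigma_len[OF so])
  have sA: "\<sigma> \<in> Acal lam N" unfolding Acal_def \<sigma>_def using w r by blast
  have vI: "v l \<in> Idx N" "w l \<in> Idx N" for l using vS w by (auto simp: SymSp_def)
  have main: "l < Lfun lam w r (\<sigma> ! (n - 1)) \<longrightarrow> overlap_exactly lam t \<sigma> n (v l) (w l)"
    if n: "n \<in> {1..CARD('d)}" for n l
  proof (induction l rule: less_induct)
    case (less l)
    show ?case
    proof (intro impI, rule ccontr)
      assume lL: "l < Lfun lam w r (\<sigma> ! (n - 1))" and nov: "\<not> overlap_exactly lam t \<sigma> n (v l) (w l)"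
      define S where "S = set (take n \<sigma>)"
      have Lk: "l < Lfun lam w r k" if "k \<in> S" for k
      proof -
        from that obtain m where m: "m < n" "\<sigma> ! m = k"
          using n len by (auto simp: S_def in_set_conv_nth)
        have "Lfun lam w r (\<sigma> ! (n - 1)) \<le> Lfun lam w r k"
        proof (cases "m = n - 1")
          case True then show ?thesis using m by simp
        next
          case False
          then have "prec lam w r (\<sigma> ! m) (\<sigma> ! (n - 1))"
          proof -
            have "sorted_wrt (prec lam w r) \<sigma>" using so unfolding sigma_ordered_def by simp
            moreover have "m < n - 1" "n - 1 < length \<sigma>" using m False n len by auto
            ultimately show ?thesis by (rule sorted_wrt_nth_less)
          qed
          then show ?thesis using m unfolding prec_def by auto
        qed
        then show ?thesis using lL by simp
      qed
      have gt: "r < (\<Prod>i<l. lam (w i) k)" if "k \<in> S" for k using Lfun_gt[OF Lk[OF that]] .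
      have eqs: "\<forall>l'<l. lam (v l') k = lam (w l') k \<and> t (v l') $ k = t (w l') $ k" if "k \<in> S" for k
        using less lL that ov_coord unfolding S_def by (meson order.strict_trans)
      let ?a = "coding lam t (\<lambda>i. v (i + l))"
      let ?b = "coding lam t (\<lambda>i. w (i + l))"
      have diff: "coding lam t v $ k - coding lam t w $ k = (\<Prod>i<l. lam (w i) k) * (?a $ k - ?b $ k)"
        if "k \<in> S" for k by (rule coding_diff[OF sp vS w eqs[OF that]])
      have a: "?a \<in> fmap lam t (v l) ` cbox 0 One"
        using coding_step[OF sp shift_SymSp[OF vS, of l], where t=t]
          coding_cube[OF sp cube shift_SymSp[OF vS, of "l+1"]] by (simp add: ac_simps)
      have b: "?b \<in> fmap lam t (w l) ` cbox 0 One"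
        using coding_step[OF sp shift_SymSp[OF w, of l], where t=t]
          coding_cube[OF sp cube shift_SymSp[OF w, of "l+1"]] by (simp add: ac_simps)
      have "\<delta>\<^sub>0 \<le> setdist (Proj \<sigma> n ` fmap lam t (v l) ` cbox 0 One) (Proj \<sigma> n ` fmap lam t (w l) ` cbox 0 One)"
        using hyp sA n vI nov by blast
      also have "\<dots> \<le> dist (Proj \<sigma> n ?a) (Proj \<sigma> n ?b)"
        using a b by (intro setdist_le_dist) auto
      finally have dd: "\<delta>\<^sub>0 \<le> norm (Proj \<sigma> n ?a - Proj \<sigma> n ?b)" by (simp add: dist_norm)
      have fS: "finite S" "S \<noteq> {}" using n len by (auto simp: S_def)
      define \<rho> where "\<rho> = Min ((\<lambda>k. \<Prod>i<l. lam (w i) k) ` S)"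
      have r\<rho>: "r < \<rho>" unfolding \<rho>_def using fS gt by (subst Min_gr_iff) auto
      have \<rho>le: "\<rho> \<le> (\<Prod>i<l. lam (w i) k)" if "k \<in> S" for k
        unfolding \<rho>_def using fS that by (intro Min_le) auto
      have "\<rho> * \<bar>(Proj \<sigma> n ?a - Proj \<sigma> n ?b) $ k\<bar> \<le> \<bar>(coding lam t w - coding lam t v) $ k\<bar>" for k
      proof (cases "k \<in> S")
        case True
        have "\<bar>(coding lam t w - coding lam t v) $ k\<bar> = (\<Prod>i<l. lam (w i) k) * \<bar>?a $ k - ?b $ k\<bar>"
          using diff[OF True] gt[OF True] r by (simp add: abs_minus_commute abs_mult)
        moreover have "\<rho> * \<bar>?a $ k - ?b $ k\<bar> \<le> (\<Prod>i<l. lam (w i) k) * \<bar>?a $ k - ?b $ k\<bar>"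
          using \<rho>le[OF True] by (simp add: mult_right_mono)
        ultimately show ?thesis using True by (simp add: Proj_def S_def)
      next
        case False then show ?thesis by (simp add: Proj_def S_def)
      qed
      then have "\<rho> * norm (Proj \<sigma> n ?a - Proj \<sigma> n ?b) \<le> norm (coding lam t w - coding lam t v)"
        using r r\<rho> by (intro norm_ge_cart) auto
      also have "\<dots> \<le> \<delta>\<^sub>0 * r" using dv by (simp add: dist_norm)
      finally have "\<rho> * norm (Proj \<sigma> n ?a - Proj \<sigma> n ?b) \<le> \<delta>\<^sub>0 * r" .
      moreover have "\<rho> * \<delta>\<^sub>0 \<le> \<rho> * norm (Proj \<sigma> n ?a - Proj \<sigma> n ?b)"
        using dd r r\<rho> by (intro mult_left_mono) auto
      moreover have "r * \<delta>\<^sub>0 < \<rho> * \<delta>\<^sub>0" using r\<rho> d0 by simp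
      ultimately show False by (simp add: mult.commute)
    qed
  qed
  show ?thesis
    unfolding Bset_def \<sigma>_def[symmetric] Let_def common_prefix_ge_def proj_seq_def
    using vS main by (auto intro: proj_idx_eq)
qed


theorem lemma6p1:
  fixes lam :: "nat \<Rightarrow> 'd::{finite,linorder} \<Rightarrow> real"
    and t :: "nat \<Rightarrow> (real, 'd) vec" and N :: nat and F :: "((real, 'd) vec) set"
  assumes "sponge lam t N F"
    and "SPPC lam t N"
  shows "(\<forall>w\<in>SymSp N. \<forall>r>0.
            coding lam t ` Bset lam t N w r \<subseteq> cball (coding lam t w) (sqrt (real CARD('d)) * r))
       \<and> (\<forall>\<delta>\<^sub>0. very_strong_SPPC lam t N \<and> \<delta>\<^sub>0 > 0 \<and>
            (\<forall>\<sigma>\<in>Acal lam N. \<forall>n\<in>{1..CARD('d)}. \<forall>i\<in>Idx N. \<forall>j\<in>Idx N.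
                \<not> overlap_exactly lam t \<sigma> n i j \<longrightarrow>
                setdist (Proj \<sigma> n ` fmap lam t i ` cbox 0 One) (Proj \<sigma> n ` fmap lam t j ` cbox 0 One) \<ge> \<delta>\<^sub>0)
          \<longrightarrow> (\<forall>w\<in>SymSp N. \<forall>r>0.
                cball (coding lam t w) (\<delta>\<^sub>0 * r) \<inter> F \<subseteq> coding lam t ` Bset lam t N w r))"
  proof -
  have sp: "SPos lam N" and cube: "\<forall>i\<in>Idx N. fmap lam t i ` cbox 0 One \<subseteq> cbox 0 One"
    and distinct: "\<forall>i\<in>Idx N. \<forall>j\<in>Idx N. i \<noteq> j \<longrightarrow> (\<exists>x\<in>cbox 0 One. fmap lam t i x \<noteq> fmap lam t j x)"
    and cF: "compact F" and inv: "F = (\<Union>i\<in>Idx N. fmap lam t i ` F)"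
    using assms(1) unfolding sponge_def SPos_def by auto
  show ?thesis
  proof (intro conjI allI ballI impI subsetI)
    fix w r y assume w: "w \<in> SymSp N" and r: "0 < r" and y: "y \<in> coding lam t ` Bset lam t N w r"
    then obtain v where v: "v \<in> Bset lam t N w r" "y = coding lam t v" by blast
    show "y \<in> cball (coding lam t w) (sqrt (real CARD('d)) * r)"
      using part1[OF sp cube distinct w r v(1)] v(2) by simp
  next
    fix \<delta>\<^sub>0 w r y
    assume h: "very_strong_SPPC lam t N \<and> \<delta>\<^sub>0 > 0 \<and>
            (\<forall>\<sigma>\<in>Acal lam N. \<forall>n\<in>{1..CARD('d)}. \<forall>i\<in>Idx N. \<forall>j\<in>Idx N.
                \<not> overlap_exactly lam t \<sigma> n i j \<longrightarrow>
                setdist (Proj \<sigma> n ` fmap lam t i ` cbox 0 One) (Proj \<sigma> n ` fmap lam t j ` cbox 0 One) \<ge> \<delta>\<^sub>0)"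
      and w: "w \<in> SymSp N" and r: "0 < r" and y: "y \<in> cball (coding lam t w) (\<delta>\<^sub>0 * r) \<inter> F"
    obtain v where vS: "v \<in> SymSp N" and vy: "coding lam t v = y"
      using F_sub[OF sp cF inv] y by blast
    have "v \<in> Bset lam t N w r"
      using part2[OF sp cube w r _ _ vS] h y vy by auto
    then show "y \<in> coding lam t ` Bset lam t N w r" using vy by blast
  qed
qed

end
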